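(* Let $\Gamma$ be a finite complete graph whose edges are coloured red, green and blue in an arbitrary manner. Then there is a finite group $G$ and an injective map $\iota$ from the vertex set of $\Gamma$ into $G$ such that, for distinct vertices $u,v$: if $\{u,v\}$ is red then $\iota(u),\iota(v)$ are adjacent in the enhanced power graph of $G$; if $\{u,v\}$ is green then $\iota(u),\iota(v)$ are adjacent in the commuting graph of $G$ but not in the enhanced power graph; if $\{u,v\}$ is blue then $\iota(u),\iota(v)$ are non-adjacent in the commuting graph of $G$.
   Context: For a group $G$: the commuting graph has vertex set $G$ with distinct $x,y$ adjacent iff $xy=yx$; the enhanced power graph has vertex set $G$ with distinct $x,y$ adjacent iff $\langle x,y\rangle$ is cyclic. *)

theory Defs
  imports "HOL-Algebra.Algebra"
begin

datatype colour = Red | Green | Blue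

definition commuting_adj :: "('g, 'b) monoid_scheme \<Rightarrow> 'g \<Rightarrow> 'g \<Rightarrow> bool" where
  "commuting_adj G x y \<longleftrightarrow> x \<in> carrier G \<and> y \<in> carrier G \<and> x \<noteq> y \<and>
     x \<otimes>\<^bsub>G\<^esub> y = y \<otimes>\<^bsub>G\<^esub> x"

definition cyclic_subgroup :: "('g, 'b) monoid_scheme \<Rightarrow> 'g set \<Rightarrow> bool" where
  "cyclic_subgroup G H \<longleftrightarrow> (\<exists>z \<in> carrier G. H = generate G {z})"

definition enhanced_power_adj :: "('g, 'b) monoid_scheme \<Rightarrow> 'g \<Rightarrow> 'g \<Rightarrow> bool" where
  "enhanced_power_adj G x y \<longleftrightarrow> x \<in> carrier G \<and> y \<in> carrier G \<and> x \<noteq> y \<and>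
     cyclic_subgroup G (generate G {x, y})"

end

theory Submission
  imports Defs "HOL-Number_Theory.Cong" "HOL-Computational_Algebra.Primes"
begin

definition mc :: "int \<Rightarrow> int \<Rightarrow> int \<Rightarrow> bool" where "mc m a b \<longleftrightarrow> a mod m = b mod m"
lemma mc_mod: "mc m a b \<Longrightarrow> mc m (a mod m) b" by (simp add: mc_def)
lemma mc_add: "mc m a b \<Longrightarrow> mc m c d \<Longrightarrow> mc m (a + c) (b + d)" unfolding mc_def by (metis mod_add_cong)
lemma mc_diff: "mc m a b \<Longrightarrow> mc m c d \<Longrightarrow> mc m (a - c) (b - d)" unfolding mc_def by (metis mod_diff_cong)
lemma mc_mult: "mc m a b \<Longrightarrow> mc m c d \<Longrightarrow> mc m (a * c) (b * d)" unfolding mc_def by (metis mod_mult_cong)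
lemma mc_uminus: "mc m a b \<Longrightarrow> mc m (- a) (- b)" unfolding mc_def by (metis mod_minus_cong)
lemma mc_refl: "mc m a a" by (simp add: mc_def)
lemma mc_key: "mc m A P \<Longrightarrow> mc m B Q \<Longrightarrow> P = Q \<Longrightarrow> A mod m = B mod m" by (simp add: mc_def)
lemmas mc_intros = mc_mod mc_add mc_diff mc_mult mc_uminus mc_refl

definition hmul :: "int \<Rightarrow> int\<times>int\<times>int \<Rightarrow> int\<times>int\<times>int \<Rightarrow> int\<times>int\<times>int" where
  "hmul m x y = ((fst x + fst y) mod m, (fst (snd x) + fst (snd y)) mod m,
                 (snd (snd x) + snd (snd y) + fst x * fst (snd y)) mod m)"

definition trip :: "int \<Rightarrow> (int\<times>int\<times>int) set" where
  "trip m = {0..<m} \<times> {0..<m} \<times> {0..<m}"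

definition HH :: "'e set \<Rightarrow> ('e \<Rightarrow> int) \<Rightarrow> ('e \<Rightarrow> int\<times>int\<times>int) monoid" where
  "HH I m = \<lparr>carrier = PiE I (\<lambda>e. trip (m e)),
             monoid.mult = (\<lambda>f g. \<lambda>e\<in>I. hmul (m e) (f e) (g e)),
             one = (\<lambda>e\<in>I. (0,0,0))\<rparr>"

lemma hmul_closed: "m > 0 \<Longrightarrow> hmul m x y \<in> trip m"
  by (auto simp: hmul_def trip_def)

lemma hmul_assoc: "hmul m (hmul m x y) z = hmul m x (hmul m y z)"
  unfolding hmul_def prod_eq_iff fst_conv snd_conv
  by (intro conjI; (rule mc_key, (rule mc_intros)+, simp add: algebra_simps))

lemma hmul_one: "x \<in> trip m \<Longrightarrow> hmul m (0,0,0) x = x"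
  by (auto simp: hmul_def trip_def)

lemma hmul_inv: "m > 0 \<Longrightarrow> x \<in> trip m \<Longrightarrow> \<exists>y\<in>trip m. hmul m y x = (0,0,0)"
  apply (rule bexI[of _ "((- fst x) mod m, (- fst (snd x)) mod m, (fst x * fst (snd x) - snd (snd x)) mod m)"])
   apply (unfold hmul_def prod_eq_iff fst_conv snd_conv)
   apply (intro conjI; subst mod_0[symmetric]; (rule mc_key, (rule mc_intros)+, simp add: algebra_simps))
  apply (simp add: trip_def)
  done

lemma HH_group: assumes "\<And>e. e \<in> I \<Longrightarrow> m e > 0" shows "group (HH I m)"
proof (rule groupI)
  fix x y assume "x \<in> carrier (HH I m)" "y \<in> carrier (HH I m)"
  then show "x \<otimes>\<^bsub>HH I m\<^esub> y \<in> carrier (HH I m)"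
    using assms by (auto simp: HH_def hmul_closed)
next
  show "\<one>\<^bsub>HH I m\<^esub> \<in> carrier (HH I m)" using assms by (auto simp: HH_def trip_def)
next
  fix x y z assume "x \<in> carrier (HH I m)" "y \<in> carrier (HH I m)" "z \<in> carrier (HH I m)"
  then show "x \<otimes>\<^bsub>HH I m\<^esub> y \<otimes>\<^bsub>HH I m\<^esub> z = x \<otimes>\<^bsub>HH I m\<^esub> (y \<otimes>\<^bsub>HH I m\<^esub> z)"
    by (auto simp: HH_def hmul_assoc)
next
  fix x assume x: "x \<in> carrier (HH I m)"
  then show "\<one>\<^bsub>HH I m\<^esub> \<otimes>\<^bsub>HH I m\<^esub> x = x"
    by (auto simp: HH_def hmul_one PiE_def extensional_def fun_eq_iff Pi_def)
next
  fix x assume x: "x \<in> carrier (HH I m)"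
  have "\<forall>e\<in>I. \<exists>y\<in>trip (m e). hmul (m e) y (x e) = (0,0,0)"
  proof
    fix e assume e: "e \<in> I"
    then have "x e \<in> trip (m e)" using x by (auto simp: HH_def PiE_iff)
    then show "\<exists>y\<in>trip (m e). hmul (m e) y (x e) = (0,0,0)" using hmul_inv assms e by blast
  qed
  then obtain y where y: "\<And>e. e \<in> I \<Longrightarrow> y e \<in> trip (m e) \<and> hmul (m e) (y e) (x e) = (0,0,0)"
    by metis
  show "\<exists>y\<in>carrier (HH I m). y \<otimes>\<^bsub>HH I m\<^esub> x = \<one>\<^bsub>HH I m\<^esub>"
    by (rule bexI[of _ "restrict y I"]) (auto simp: HH_def y)
qed

lemma HH_finite: "finite I \<Longrightarrow> finite (carrier (HH I m))"
  by (auto simp: HH_def trip_def intro!: finite_PiE)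

definition tri :: "nat \<Rightarrow> nat" where "tri k = k * (k - 1) div 2"

definition hpow :: "int \<Rightarrow> int\<times>int\<times>int \<Rightarrow> nat \<Rightarrow> int\<times>int\<times>int" where
  "hpow m x k = ((int k * fst x) mod m, (int k * fst (snd x)) mod m,
     (int k * snd (snd x) + int (tri k) * fst x * fst (snd x)) mod m)"

lemma tri_Suc: "tri (Suc k) = tri k + k"
proof (cases k)
  case (Suc j)
  have "Suc k * (Suc k - 1) = Suc j * j + k * 2" using Suc by (simp add: algebra_simps)
  then show ?thesis using Suc unfolding tri_def by simp
qed (simp add: tri_def)

lemma HH_pow: "(x [^]\<^bsub>HH I m\<^esub> (k::nat)) = (\<lambda>e\<in>I. hpow (m e) (x e) k)"
proof (induction k)
  case 0 then show ?case by (simp add: HH_def hpow_def tri_def)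
next
  case (Suc k)
  show ?case
    apply (simp only: nat_pow_Suc Suc)
    apply (simp add: HH_def)
    apply (rule ext)
    apply (simp add: hmul_def hpow_def tri_Suc prod_eq_iff)
    apply (intro conjI impI; (rule mc_key, (rule mc_intros)+, simp add: algebra_simps))
    done
qed

lemma transport:
  fixes H :: "'a monoid"
  assumes grp: "group H" and fin: "finite (carrier H)"
  shows "\<exists>(G::nat monoid) f. group G \<and> finite (carrier G) \<and> f ` carrier H = carrier G \<and>
     inj_on f (carrier H) \<and>
     (\<forall>a\<in>carrier H. \<forall>b\<in>carrier H. f (a \<otimes>\<^bsub>H\<^esub> b) = f a \<otimes>\<^bsub>G\<^esub> f b) \<and>
     (\<forall>A. A \<subseteq> carrier H \<longrightarrow> generate G (f ` A) = f ` generate H A)"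
proof -
  interpret H: group H by (rule grp)
  obtain f :: "'a \<Rightarrow> nat" and n where f: "inj_on f (carrier H)"
    using finite_imp_inj_to_nat_seg[OF fin] by blast
  define g where "g = inv_into (carrier H) f"
  have gf: "g (f a) = a" if "a \<in> carrier H" for a
    using f that by (simp add: g_def)
  define G :: "nat monoid" where "G = \<lparr>carrier = f ` carrier H,
     monoid.mult = (\<lambda>x y. f (g x \<otimes>\<^bsub>H\<^esub> g y)), one = f \<one>\<^bsub>H\<^esub>\<rparr>"
  have cG: "carrier G = f ` carrier H" and mG: "\<And>x y. x \<otimes>\<^bsub>G\<^esub> y = f (g x \<otimes>\<^bsub>H\<^esub> g y)"
    and oG: "\<one>\<^bsub>G\<^esub> = f \<one>\<^bsub>H\<^esub>" by (simp_all add: G_def)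
  have multG: "f a \<otimes>\<^bsub>G\<^esub> f b = f (a \<otimes>\<^bsub>H\<^esub> b)" if "a \<in> carrier H" "b \<in> carrier H" for a b
    using that by (simp add: mG gf)
  have grpG: "group G"
  proof (rule groupI)
    show "x \<otimes>\<^bsub>G\<^esub> y \<in> carrier G" if xy: "x \<in> carrier G" "y \<in> carrier G" for x y
    proof -
      obtain a b where "a \<in> carrier H" "b \<in> carrier H" "x = f a" "y = f b" using xy by (auto simp: cG oG)
      then show ?thesis using multG[of a b] by (simp add: cG oG)
    qed
    show "\<one>\<^bsub>G\<^esub> \<in> carrier G" by (simp add: cG oG)
    show "x \<otimes>\<^bsub>G\<^esub> y \<otimes>\<^bsub>G\<^esub> z = x \<otimes>\<^bsub>G\<^esub> (y \<otimes>\<^bsub>G\<^esub> z)"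
      if xyz: "x \<in> carrier G" "y \<in> carrier G" "z \<in> carrier G" for x y z
    proof -
      obtain a b d where "a \<in> carrier H" "b \<in> carrier H" "d \<in> carrier H" "x = f a" "y = f b" "z = f d"
        using xyz by (auto simp: cG oG)
      then show ?thesis using multG by (simp add: H.m_assoc)
    qed
    show "\<one>\<^bsub>G\<^esub> \<otimes>\<^bsub>G\<^esub> x = x" if xG: "x \<in> carrier G" for x
    proof -
      obtain a where "a \<in> carrier H" "x = f a" using xG by (auto simp: cG oG)
      then show ?thesis using multG[of "\<one>\<^bsub>H\<^esub>" a] by (simp add: cG oG)
    qed
    show "\<exists>y\<in>carrier G. y \<otimes>\<^bsub>G\<^esub> x = \<one>\<^bsub>G\<^esub>" if xG: "x \<in> carrier G" for x
    proof -
      obtain a where a: "a \<in> carrier H" "x = f a" using xG by (auto simp: cG oG)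
      have "f (inv\<^bsub>H\<^esub> a) \<otimes>\<^bsub>G\<^esub> x = \<one>\<^bsub>G\<^esub>"
        using a multG[of "inv\<^bsub>H\<^esub> a" a] by (simp add: cG oG)
      moreover have "f (inv\<^bsub>H\<^esub> a) \<in> carrier G" using a by (simp add: cG oG)
      ultimately show ?thesis by blast
    qed
  qed
  have hom: "f \<in> hom H G"
    unfolding hom_def using multG by (auto simp: cG oG)
  interpret GH: group_hom H G f
    by (simp add: group_hom_def group_hom_axioms_def grp grpG hom)
  show ?thesis
    apply (rule exI[of _ G], rule exI[of _ f])
    apply (intro conjI)
    using grpG apply blast
    using fin cG apply simp
    using cG apply simp
    using f apply blast
    using multG apply simp
    using GH.generate_img apply blast
    done
qed


definition U3 :: "(int\<times>int\<times>int) set" where "U3 = {(0,0,0),(1,0,0),(0,1,0),(0,0,1)}"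

lemma U3_trip: "M \<ge> 2 \<Longrightarrow> x \<in> U3 \<Longrightarrow> x \<in> trip M"
  by (auto simp: U3_def trip_def)

lemma hpow_unit1: "M \<ge> 2 \<Longrightarrow> x \<in> U3 \<Longrightarrow> int k mod M = 1 \<Longrightarrow> hpow M x k = x"
  by (auto simp: U3_def hpow_def mod_mult_left_eq[symmetric])

lemma hpow_unit0: "M \<ge> 2 \<Longrightarrow> x \<in> U3 \<Longrightarrow> M dvd int k \<Longrightarrow> hpow M x k = (0,0,0)"
  by (auto simp: U3_def hpow_def)

lemma hmul_zero_r: "x \<in> trip M \<Longrightarrow> hmul M x (0,0,0) = x"
  by (auto simp: hmul_def trip_def)

lemma hmul_zero_l: "x \<in> trip M \<Longrightarrow> hmul M (0,0,0) x = x"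
  by (auto simp: hmul_def trip_def)

lemma HH_mult_apply: "e \<in> I \<Longrightarrow> (a \<otimes>\<^bsub>HH I m\<^esub> b) e = hmul (m e) (a e) (b e)"
  by (simp add: HH_def)

lemma HH_carrier_apply: "a \<in> carrier (HH I m) \<Longrightarrow> e \<in> I \<Longrightarrow> a e \<in> trip (m e)"
  by (auto simp: HH_def PiE_iff)

lemma HH_carrier_out: "a \<in> carrier (HH I m) \<Longrightarrow> e \<notin> I \<Longrightarrow> a e = undefined"
  by (auto simp: HH_def PiE_iff extensional_def)

lemma red_pow:
  fixes h :: "'e \<Rightarrow> nat"
  assumes fin: "finite I" and pr: "\<And>e. e \<in> I \<Longrightarrow> Factorial_Ring.prime (h e)" and inj: "inj_on h I"
    and mdef: "m = (\<lambda>e. int (h e))"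
    and a: "a \<in> carrier (HH I m)" and b: "b \<in> carrier (HH I m)"
    and U: "\<And>e. e \<in> I \<Longrightarrow> a e \<in> U3 \<and> b e \<in> U3"
    and disj: "\<And>e. e \<in> I \<Longrightarrow> a e = (0,0,0) \<or> b e = (0,0,0)"
  shows "\<exists>k::nat. (a \<otimes>\<^bsub>HH I m\<^esub> b) [^]\<^bsub>HH I m\<^esub> k = a"
proof -
  define Sa where "Sa = {e\<in>I. a e \<noteq> (0,0,0)}"
  define Sb where "Sb = {e\<in>I. b e \<noteq> (0,0,0)}"
  define P where "P = (\<Prod>e\<in>Sa. h e)"
  define Q where "Q = (\<Prod>e\<in>Sb. h e)"
  have cop: "coprime Q P"
    unfolding P_def Q_def
  proof (rule prod_coprime_left, rule prod_coprime_right)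
    fix e e' assume e: "e \<in> Sb" and e': "e' \<in> Sa"
    then have "e \<noteq> e'" using disj by (auto simp: Sa_def Sb_def)
    then have "h e \<noteq> h e'" using inj e e' by (auto simp: Sa_def Sb_def inj_on_def)
    then show "coprime (h e) (h e')" using pr e e' by (intro primes_coprime) (auto simp: Sa_def Sb_def)
  qed
  obtain t where t: "[Q * t = Suc 0] (mod P)" using cong_solve_coprime_nat[OF cop] by blast
  define k where "k = Q * t"
  have kA: "int k mod m e = 1" if "e \<in> Sa" for e
  proof -
    have "h e dvd P" unfolding P_def using that fin by (intro dvd_prodI) (auto simp: Sa_def)
    then have "[k = Suc 0] (mod h e)" using t cong_dvd_modulus_nat k_def by blast
    then have "k mod h e = 1" using pr[of e] that prime_gt_1_nat[of "h e"]
      by (auto simp: cong_def Sa_def)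
    then show ?thesis by (simp add: mdef flip: of_nat_mod)
  qed
  have kB: "m e dvd int k" if "e \<in> Sb" for e
  proof -
    have "h e dvd Q" unfolding Q_def using that fin by (intro dvd_prodI) (auto simp: Sb_def)
    then show ?thesis by (simp add: mdef k_def)
  qed
  have m2: "m e \<ge> 2" if "e \<in> I" for e
    using pr[OF that] prime_ge_2_nat[of "h e"] by (simp add: mdef)
  show ?thesis
  proof (rule exI[of _ k], rule ext)
    fix e
    show "((a \<otimes>\<^bsub>HH I m\<^esub> b) [^]\<^bsub>HH I m\<^esub> k) e = a e"
    proof (cases "e \<in> I")
      case False then show ?thesis using HH_carrier_out[OF a] by (simp add: HH_pow)
    next
      case True
      have ta: "a e \<in> trip (m e)" using HH_carrier_apply[OF a True] .
      have tb: "b e \<in> trip (m e)" using HH_carrier_apply[OF b True] .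
      show ?thesis
      proof (cases "e \<in> Sa")
        case True
        then have "b e = (0,0,0)" using disj by (auto simp: Sa_def)
        then show ?thesis using True \<open>e \<in> I\<close> ta hmul_zero_r kA[OF True] hpow_unit1 m2 U
          by (simp add: HH_pow HH_mult_apply)
      next
        case nSa: False
        then have a0: "a e = (0,0,0)" using \<open>e \<in> I\<close> by (auto simp: Sa_def)
        show ?thesis
        proof (cases "e \<in> Sb")
          case True
          then show ?thesis using a0 \<open>e \<in> I\<close> tb hmul_zero_l kB[OF True] hpow_unit0 m2 U
            by (simp add: HH_pow HH_mult_apply)
        next
          case False
          then have "b e = (0,0,0)" using \<open>e \<in> I\<close> by (auto simp: Sb_def)
          then show ?thesis using a0 \<open>e \<in> I\<close>
            by (simp add: HH_pow HH_mult_apply hmul_def hpow_def)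
        qed
      qed
    qed
  qed
qed

lemma arith_green:
  fixes M n n' p q r T :: int
  assumes M: "M \<ge> 2" and h1: "(n*p) mod M = 1" and h2: "(n*q) mod M = 0" and h3: "(n'*p) mod M = 0"
    and h4: "(n'*r + T*p*q) mod M = 1"
  shows False
proof -
  have "1 mod M = 1" using M by simp
  then have "(n*p) mod M = 1 mod M" using h1 by simp
  then have d1: "M dvd n*p - 1" by (simp only: mod_eq_dvd_iff)
  have d2: "M dvd n*q" using h2 by auto
  have d3: "M dvd n'*p" using h3 by auto
  have "n' = n'*(1 - n*p) + n*(n'*p)" by (simp add: algebra_simps)
  moreover have "M dvd n'*(1 - n*p) + n*(n'*p)"
  proof (rule dvd_add)
    show "M dvd n'*(1 - n*p)" using d1 by (simp add: dvd_diff_commute)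
    show "M dvd n*(n'*p)" using d3 by simp
  qed
  ultimately have dn': "M dvd n'" by simp
  have "q = q*(1 - n*p) + p*(n*q)" by (simp add: algebra_simps)
  moreover have "M dvd q*(1 - n*p) + p*(n*q)"
  proof (rule dvd_add)
    show "M dvd q*(1 - n*p)" using d1 by (simp add: dvd_diff_commute)
    show "M dvd p*(n*q)" using d2 by simp
  qed
  ultimately have dq: "M dvd q" by simp
  have "M dvd n'*r + T*p*q" using dn' dq by (simp add: dvd_add dvd_mult2)
  then have "(n'*r + T*p*q) mod M = 0" by simp
  with h4 show False by simp
qed

lemma hmul_comm: "fst x * fst (snd y) = fst y * fst (snd x) \<Longrightarrow> hmul M x y = hmul M y x"
  by (simp add: hmul_def algebra_simps)

lemma HH_comm:
  assumes "\<And>e. e \<in> I \<Longrightarrow> fst (a e) * fst (snd (b e)) = fst (b e) * fst (snd (a e))"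
  shows "a \<otimes>\<^bsub>HH I m\<^esub> b = b \<otimes>\<^bsub>HH I m\<^esub> a"
  using assms hmul_comm by (auto simp: HH_def fun_eq_iff)

lemma HH_noncomm:
  assumes "e \<in> I" "a e = (1,0,0)" "b e = (0,1,0)" "m e \<ge> 2"
  shows "a \<otimes>\<^bsub>HH I m\<^esub> b \<noteq> b \<otimes>\<^bsub>HH I m\<^esub> a"
proof
  assume "a \<otimes>\<^bsub>HH I m\<^esub> b = b \<otimes>\<^bsub>HH I m\<^esub> a"
  then have "hmul (m e) (a e) (b e) = hmul (m e) (b e) (a e)" using assms(1) by (simp add: HH_mult_apply[symmetric])
  then show False using assms by (simp add: hmul_def)
qed

lemma HH_green:
  assumes fin: "finite I" and mpos: "\<And>e. e \<in> I \<Longrightarrow> m e > 0"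
    and e: "e \<in> I" "m e \<ge> 2" and a: "a \<in> carrier (HH I m)" and b: "b \<in> carrier (HH I m)"
    and ae: "a e = (1,0,0)" and be: "b e = (0,0,1)"
  shows "\<not> (\<exists>z\<in>carrier (HH I m). generate (HH I m) {a, b} = generate (HH I m) {z})"
proof
  interpret G: group "HH I m" by (rule HH_group[OF mpos])
  assume "\<exists>z\<in>carrier (HH I m). generate (HH I m) {a, b} = generate (HH I m) {z}"
  then obtain z where z: "z \<in> carrier (HH I m)" "generate (HH I m) {a, b} = generate (HH I m) {z}" by blast
  have natpow: "\<exists>n::nat. y = z [^]\<^bsub>HH I m\<^esub> n" if "y \<in> generate (HH I m) {z}" for y
  proof -
    have "y \<in> {z [^]\<^bsub>HH I m\<^esub> (k::int) | k. k \<in> UNIV}" using that G.generate_pow[OF z(1)] by simp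
    then obtain i :: int where i: "y = z [^]\<^bsub>HH I m\<^esub> i" by blast
    have o: "G.ord z \<ge> 1" using G.ord_ge_1[OF HH_finite[OF fin] z(1)] .
    define n where "n = nat (i mod int (G.ord z))"
    have "int n = i mod int (G.ord z)" using o by (simp add: n_def)
    then have "int (G.ord z) dvd (int n - i)" by (metis mod_eq_dvd_iff mod_mod_trivial)
    then have "z [^]\<^bsub>HH I m\<^esub> i = z [^]\<^bsub>HH I m\<^esub> (int n)"
      using G.int_pow_eq[OF z(1)] by blast
    then show ?thesis using i by (metis int_pow_int)
  qed
  have "a \<in> generate (HH I m) {a,b}" by (rule generate.incl) simp
  then have "a \<in> generate (HH I m) {z}" using z(2) by simp
  from natpow[OF this] obtain n1 :: nat where n1: "a = z [^]\<^bsub>HH I m\<^esub> n1" by blast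
  have "b \<in> generate (HH I m) {a,b}" by (rule generate.incl) simp
  then have "b \<in> generate (HH I m) {z}" using z(2) by simp
  from natpow[OF this] obtain n2 :: nat where n2: "b = z [^]\<^bsub>HH I m\<^esub> n2" by blast
  have "hpow (m e) (z e) n1 = (1,0,0)" using n1 ae e(1) by (simp add: HH_pow)
  moreover have "hpow (m e) (z e) n2 = (0,0,1)" using n2 be e(1) by (simp add: HH_pow)
  ultimately show False
    using arith_green[OF e(2), of "int n1" "fst (z e)" "fst (snd (z e))" "int n2" "snd (snd (z e))" "int (tri n2)"]
    unfolding hpow_def prod_eq_iff fst_conv snd_conv by (simp add: mult.assoc)
qed


definition tc :: "colour \<Rightarrow> int\<times>int\<times>int" where
  "tc x = (case x of Red \<Rightarrow> (0,0,0) | Green \<Rightarrow> (0,0,1) | Blue \<Rightarrow> (0,1,0))"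

definition coord :: "('v \<Rightarrow> 'v \<Rightarrow> colour) \<Rightarrow> 'v \<Rightarrow> 'v \<times> 'v \<Rightarrow> int\<times>int\<times>int" where
  "coord c u e = (if u = fst e then (1,0,0) else if u = snd e then tc (c (fst e) (snd e)) else (0,0,0))"

lemma coord_U3: "coord c u e \<in> U3"
  by (cases "c (fst e) (snd e)") (auto simp: coord_def tc_def U3_def)

lemma coord_comm:
  assumes "u \<noteq> v" "c u v \<noteq> Blue" "c v u = c u v" "s \<noteq> t"
  shows "fst (coord c u (s,t)) * fst (snd (coord c v (s,t))) = fst (coord c v (s,t)) * fst (snd (coord c u (s,t)))"
  using assms by (cases "c s t"; cases "c u v") (auto simp: coord_def tc_def)

lemma coord_red:
  assumes "u \<noteq> v" "c u v = Red" "c v u = Red" "s \<noteq> t"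
  shows "coord c u (s,t) = (0,0,0) \<or> coord c v (s,t) = (0,0,0)"
  using assms by (cases "c s t") (auto simp: coord_def tc_def)

lemma coord_uv: "u \<noteq> v \<Longrightarrow> coord c u (u,v) = (1,0,0) \<and> coord c v (u,v) = tc (c u v)"
  by (simp add: coord_def)

lemma tc_ne: "tc x \<noteq> (1,0,0)"
  by (cases x) (auto simp: tc_def)

theorem mainTheorem13:
  fixes V :: "'v set" and c :: "'v \<Rightarrow> 'v \<Rightarrow> colour"
  assumes "finite V"
    and "\<And>u v. u \<in> V \<Longrightarrow> v \<in> V \<Longrightarrow> u \<noteq> v \<Longrightarrow> c u v = c v u"
  shows "\<exists>(G :: nat monoid) \<iota>. group G \<and> finite (carrier G) \<and>
           \<iota> ` V \<subseteq> carrier G \<and> inj_on \<iota> V \<and>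
           (\<forall>u \<in> V. \<forall>v \<in> V. u \<noteq> v \<longrightarrow>
              (c u v = Red \<longrightarrow> enhanced_power_adj G (\<iota> u) (\<iota> v)) \<and>
              (c u v = Green \<longrightarrow> commuting_adj G (\<iota> u) (\<iota> v) \<and>
                                 \<not> enhanced_power_adj G (\<iota> u) (\<iota> v)) \<and>
              (c u v = Blue \<longrightarrow> \<not> commuting_adj G (\<iota> u) (\<iota> v)))"
proof -
  note finV = assms(1) and csym = assms(2)
  define I where "I = {p. fst p \<in> V \<and> snd p \<in> V \<and> fst p \<noteq> snd p}"
  have finI: "finite I"
    by (rule finite_subset[of _ "V \<times> V"]) (auto simp: I_def finV)
  obtain B where B: "finite B" "card B = card I" "B \<subseteq> {p::nat. Factorial_Ring.prime p}"
    using infinite_arbitrarily_large[OF primes_infinite] by blast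
  obtain h where h: "bij_betw h I B" using finite_same_card_bij[OF finI B(1)] B(2) by metis
  have injh: "inj_on h I" using h by (simp add: bij_betw_def)
  have prh: "\<And>e. e \<in> I \<Longrightarrow> Factorial_Ring.prime (h e)" using h B(3) by (auto simp: bij_betw_def)
  define m where "m = (\<lambda>e. int (h e))"
  have m2: "\<And>e. e \<in> I \<Longrightarrow> m e \<ge> 2" using prh prime_ge_2_nat by (fastforce simp: m_def)
  have mpos: "\<And>e. e \<in> I \<Longrightarrow> m e > 0" using m2 by fastforce
  define H where "H = HH I m"
  interpret H: group H unfolding H_def by (rule HH_group[OF mpos])
  have finH: "finite (carrier H)" unfolding H_def by (rule HH_finite[OF finI])
  define \<iota> where "\<iota> = (\<lambda>u. \<lambda>e\<in>I. coord c u e)"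
  have \<iota>car: "\<iota> u \<in> carrier H" for u
  proof -
    have "carrier H = PiE I (\<lambda>e. trip (m e))" by (simp add: H_def HH_def)
    then show ?thesis unfolding \<iota>_def by (simp add: restrict_PiE_iff U3_trip[OF m2 coord_U3])
  qed
  have \<iota>app: "\<iota> u e = coord c u e" if "e \<in> I" for u e using that by (simp add: \<iota>_def)
  obtain G :: "nat monoid" and f where G: "group G" "finite (carrier G)" "f ` carrier H = carrier G"
     "inj_on f (carrier H)" "\<forall>a\<in>carrier H. \<forall>b\<in>carrier H. f (a \<otimes>\<^bsub>H\<^esub> b) = f a \<otimes>\<^bsub>G\<^esub> f b"
     "\<forall>A. A \<subseteq> carrier H \<longrightarrow> generate G (f ` A) = f ` generate H A"
    using transport[OF H.group_axioms finH] by blast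
  interpret GG: group G by (rule G(1))
  have fcar: "f a \<in> carrier G" if "a \<in> carrier H" for a using imageI[OF that, of f] G(3) by simp
  have T1: "commuting_adj G (f a) (f b) \<longleftrightarrow> a \<otimes>\<^bsub>H\<^esub> b = b \<otimes>\<^bsub>H\<^esub> a"
    if ab: "a \<in> carrier H" "b \<in> carrier H" "a \<noteq> b" for a b
  proof -
    have "f a \<noteq> f b" using inj_on_eq_iff[OF G(4) ab(1,2)] ab(3) by simp
    moreover have "f (a \<otimes>\<^bsub>H\<^esub> b) = f (b \<otimes>\<^bsub>H\<^esub> a) \<longleftrightarrow> a \<otimes>\<^bsub>H\<^esub> b = b \<otimes>\<^bsub>H\<^esub> a"
      using inj_on_eq_iff[OF G(4) H.m_closed[OF ab(1,2)] H.m_closed[OF ab(2,1)]] .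
    ultimately show ?thesis using ab G(5) fcar by (auto simp: commuting_adj_def)
  qed
  have T2: "enhanced_power_adj G (f a) (f b) \<longleftrightarrow> (\<exists>z\<in>carrier H. generate H {a, b} = generate H {z})"
    if ab: "a \<in> carrier H" "b \<in> carrier H" "a \<noteq> b" for a b
  proof -
    have fab: "f a \<noteq> f b" using inj_on_eq_iff[OF G(4) ab(1,2)] ab(3) by simp
    have g1: "generate G {f a, f b} = f ` generate H {a, b}"
      using G(6)[rule_format, of "{a,b}"] ab by simp
    have eqv: "generate G {f z} = generate G {f a, f b} \<longleftrightarrow> generate H {z} = generate H {a, b}"
      if z: "z \<in> carrier H" for z
    proof -
      have "generate G {f z} = f ` generate H {z}" using G(6)[rule_format, of "{z}"] z by simp
      moreover have "generate H {z} \<subseteq> carrier H" using z H.generate_in_carrier[of "{z}"] by auto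
      moreover have "generate H {a, b} \<subseteq> carrier H" using ab H.generate_in_carrier[of "{a,b}"] by auto
      ultimately show ?thesis using g1 G(4) by (simp add: inj_on_image_eq_iff)
    qed
    have "cyclic_subgroup G (generate G {f a, f b}) \<longleftrightarrow> (\<exists>z\<in>carrier H. generate H {a, b} = generate H {z})"
    proof
      assume "cyclic_subgroup G (generate G {f a, f b})"
      then obtain z' where z': "z' \<in> carrier G" "generate G {f a, f b} = generate G {z'}"
        by (auto simp: cyclic_subgroup_def)
      then obtain z where z: "z \<in> carrier H" "z' = f z" using G(3) by blast
      then show "\<exists>z\<in>carrier H. generate H {a, b} = generate H {z}" using eqv[OF z(1)] z'(2) z(2) by auto
    next
      assume "\<exists>z\<in>carrier H. generate H {a, b} = generate H {z}"
      then obtain z where z: "z \<in> carrier H" "generate H {a, b} = generate H {z}" by blast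
      then show "cyclic_subgroup G (generate G {f a, f b})"
        unfolding cyclic_subgroup_def using eqv[OF z(1)] fcar[OF z(1)] z(2) by auto
    qed
    then show ?thesis using fab fcar ab by (simp add: enhanced_power_adj_def)
  qed
  show ?thesis
  proof (rule exI[of _ G], rule exI[of _ "f \<circ> \<iota>"], intro conjI)
    show "group G" by (rule G(1))
    show "finite (carrier G)" by (rule G(2))
    show "(f \<circ> \<iota>) ` V \<subseteq> carrier G" using fcar \<iota>car by auto
    have inj\<iota>: "\<iota> u \<noteq> \<iota> v" if "u \<in> V" "v \<in> V" "u \<noteq> v" for u v
    proof -
      have e: "(u,v) \<in> I" using that by (simp add: I_def)
      have "\<iota> u (u,v) \<noteq> \<iota> v (u,v)" using coord_uv[OF that(3)] tc_ne[of "c u v"] \<iota>app[OF e] by auto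
      then show ?thesis by auto
    qed
    show "inj_on (f \<circ> \<iota>) V"
    proof (rule inj_onI)
      fix u v assume uv: "u \<in> V" "v \<in> V" "(f \<circ> \<iota>) u = (f \<circ> \<iota>) v"
      then have "\<iota> u = \<iota> v" using G(4) \<iota>car by (simp add: inj_on_def)
      then show "u = v" using inj\<iota> uv by blast
    qed
    show "\<forall>u\<in>V. \<forall>v\<in>V. u \<noteq> v \<longrightarrow>
       (c u v = Red \<longrightarrow> enhanced_power_adj G ((f \<circ> \<iota>) u) ((f \<circ> \<iota>) v)) \<and>
       (c u v = Green \<longrightarrow> commuting_adj G ((f \<circ> \<iota>) u) ((f \<circ> \<iota>) v) \<and>
          \<not> enhanced_power_adj G ((f \<circ> \<iota>) u) ((f \<circ> \<iota>) v)) \<and>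
       (c u v = Blue \<longrightarrow> \<not> commuting_adj G ((f \<circ> \<iota>) u) ((f \<circ> \<iota>) v))"
    proof (intro ballI impI conjI)
      fix u v assume u: "u \<in> V" and v: "v \<in> V" and uv: "u \<noteq> v"
      define a where "a = \<iota> u"
      define b where "b = \<iota> v"
      have a: "a \<in> carrier H" and b: "b \<in> carrier H" and ab: "a \<noteq> b"
        using \<iota>car inj\<iota> u v uv by (auto simp: a_def b_def)
      have e0: "(u,v) \<in> I" using u v uv by (simp add: I_def)
      have ae0: "a (u,v) = (1,0,0)" and be0: "b (u,v) = tc (c u v)"
        using coord_uv[OF uv] \<iota>app[OF e0] by (auto simp: a_def b_def)
      have comm: "a \<otimes>\<^bsub>H\<^esub> b = b \<otimes>\<^bsub>H\<^esub> a" if nb: "c u v \<noteq> Blue"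
        unfolding H_def
      proof (rule HH_comm)
        fix e assume e: "e \<in> I"
        obtain s t where st: "e = (s,t)" by fastforce
        have "s \<noteq> t" using e st by (simp add: I_def)
        then show "fst (a e) * fst (snd (b e)) = fst (b e) * fst (snd (a e))"
          using coord_comm[OF uv nb csym[OF v u uv[symmetric]] ] e st \<iota>app
          by (simp add: a_def b_def csym[OF u v uv])
      qed
      have red: "enhanced_power_adj G ((f \<circ> \<iota>) u) ((f \<circ> \<iota>) v)" if R: "c u v = Red"
      proof -
        have cvu: "c v u = Red" using R csym[OF u v uv] by simp
        have U: "\<And>e. e \<in> I \<Longrightarrow> a e \<in> U3 \<and> b e \<in> U3"
          using \<iota>app by (simp add: a_def b_def coord_U3)
        have D: "\<And>e. e \<in> I \<Longrightarrow> a e = (0,0,0) \<or> b e = (0,0,0)"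
        proof -
          fix e assume e: "e \<in> I"
          obtain s t where st: "e = (s,t)" by fastforce
          have "s \<noteq> t" using e st by (simp add: I_def)
          then show "a e = (0,0,0) \<or> b e = (0,0,0)"
            using coord_red[OF uv R cvu] e st \<iota>app by (simp add: a_def b_def)
        qed
        obtain k :: nat where k: "(a \<otimes>\<^bsub>H\<^esub> b) [^]\<^bsub>H\<^esub> k = a"
          using red_pow[OF finI prh injh m_def, of a b] a b U D by (auto simp: H_def)
        obtain k' :: nat where k': "(b \<otimes>\<^bsub>H\<^esub> a) [^]\<^bsub>H\<^esub> k' = b"
        proof -
          have D': "\<And>e. e \<in> I \<Longrightarrow> b e = (0,0,0) \<or> a e = (0,0,0)" using D by blast
          show ?thesis using red_pow[OF finI prh injh m_def, of b a] a b U D' that by (auto simp: H_def)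
        qed
        define z where "z = a \<otimes>\<^bsub>H\<^esub> b"
        have zc: "z \<in> carrier H" using a b by (simp add: z_def)
        have zab: "b \<otimes>\<^bsub>H\<^esub> a = z" using comm R by (simp add: z_def)
        have pw: "z [^]\<^bsub>H\<^esub> (n::nat) \<in> generate H {z}" for n
          using H.generate_pow[OF zc] by (metis (mono_tags, lifting) int_pow_int mem_Collect_eq UNIV_I)
        have "generate H {a, b} \<subseteq> generate H {z}"
        proof (rule H.generate_subgroup_incl)
          show "{a, b} \<subseteq> generate H {z}" using pw[of k] pw[of k'] k k' zab by (simp add: z_def)
          show "subgroup (generate H {z}) H" using zc H.generate_is_subgroup[of "{z}"] by auto
        qed
        moreover have "generate H {z} \<subseteq> generate H {a, b}"
        proof (rule H.generate_subgroup_incl)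
          have "z \<in> generate H {a, b}" unfolding z_def
            by (intro generate.eng generate.incl) auto
          then show "{z} \<subseteq> generate H {a, b}" by simp
          show "subgroup (generate H {a, b}) H" using a b H.generate_is_subgroup[of "{a,b}"] by auto
        qed
        ultimately have "generate H {a, b} = generate H {z}" by blast
        then show ?thesis using T2[OF a b ab] zc by (auto simp: a_def b_def)
      qed
      show "c u v = Red \<Longrightarrow> enhanced_power_adj G ((f \<circ> \<iota>) u) ((f \<circ> \<iota>) v)" by (rule red)
      show "c u v = Green \<Longrightarrow> commuting_adj G ((f \<circ> \<iota>) u) ((f \<circ> \<iota>) v)"
      proof -
        assume g: "c u v = Green"
        have "commuting_adj G (f a) (f b)" using T1[OF a b ab] comm g by simp
        then show ?thesis by (simp add: a_def b_def)
      qed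
      show "c u v = Green \<Longrightarrow> \<not> enhanced_power_adj G ((f \<circ> \<iota>) u) ((f \<circ> \<iota>) v)"
      proof -
        assume g: "c u v = Green"
        have "b (u,v) = (0,0,1)" using be0 g by (simp add: tc_def)
        then have "\<not> (\<exists>z\<in>carrier (HH I m). generate (HH I m) {a, b} = generate (HH I m) {z})"
          using HH_green[of I m "(u,v)" a b] finI mpos e0 m2[OF e0] a b ae0 by (simp add: H_def)
        then have "\<not> (\<exists>z\<in>carrier H. generate H {a, b} = generate H {z})"
          by (simp add: H_def)
        then have "\<not> enhanced_power_adj G (f a) (f b)" using T2[OF a b ab] by simp
        then show ?thesis by (simp add: a_def b_def)
      qed
      show "c u v = Blue \<Longrightarrow> \<not> commuting_adj G ((f \<circ> \<iota>) u) ((f \<circ> \<iota>) v)"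
      proof -
        assume bl: "c u v = Blue"
        have "b (u,v) = (0,1,0)" using be0 bl by (simp add: tc_def)
        then have "a \<otimes>\<^bsub>H\<^esub> b \<noteq> b \<otimes>\<^bsub>H\<^esub> a"
          using HH_noncomm[of "(u,v)" I a b m] e0 ae0 m2[OF e0] by (simp add: H_def)
        then show ?thesis using T1[OF a b ab] by (simp add: a_def b_def)
      qed
    qed
  qed
qed

end
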